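(* Let $n\ge 6$ and let $CB_n$ be the set of chemical bicyclic graphs on $n$ vertices. Define the following subsets of $CB_n$ (in each, all $m_{i,j}$ not listed are $0$): $\beta_2$: $n_4=0,n_3=2,n_2=n-2,n_1=0$, $m_{2,3}=4$, $m_{3,3}=1$, $m_{2,2}=n-4$; $\beta_3$: $n_4=0,n_3=2,n_2=n-2,n_1=0$, $m_{2,3}=6$, $m_{2,2}=n-5$; $\beta_9$: $n_4=0,n_3=3,n_2=n-4,n_1=1$, $m_{1,2}=1$, $m_{2,3}=3$, $m_{3,3}=3$, $m_{2,2}=n-6$. Let $G_1\in\beta_2$, $G_2\in\beta_3$, $G_3\in\beta_9$, and let $G\in CB_n$ not belong to $\beta_2\cup\beta_3\cup\beta_9$. Then $SO_{red}(G_1)<SO_{red}(G_2)<SO_{red}(G_3)<SO_{red}(G)$.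
   Context: All graphs are simple and connected. A chemical graph is a graph with maximum degree at most $4$; a bicyclic graph is a connected graph with $n$ vertices and $n+1$ edges. $d_G(u)$ is the degree of $u$, $n_i$ the number of vertices of degree $i$, and $m_{i,j}$ the number of edges joining a vertex of degree $i$ to a vertex of degree $j$. The reduced Sombor index is $SO_{red}(G)=\sum_{uv\in E(G)}\sqrt{(d_G(u)-1)^2+(d_G(v)-1)^2}$. *)

theory Defs
  imports Complex_Main
begin

definition simple_graph :: "'a set \<Rightarrow> 'a set set \<Rightarrow> bool" where
  "simple_graph V E \<longleftrightarrow> finite V \<and> (\<forall>e\<in>E. \<exists>u v. e = {u, v} \<and> u \<noteq> v \<and> u \<in> V \<and> v \<in> V)"

definition deg :: "'a set set \<Rightarrow> 'a \<Rightarrow> nat" where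
  "deg E v = card {e \<in> E. v \<in> e}"

definition adj :: "'a set set \<Rightarrow> ('a \<times> 'a) set" where
  "adj E = {(u, v). {u, v} \<in> E}"

definition connected_graph :: "'a set \<Rightarrow> 'a set set \<Rightarrow> bool" where
  "connected_graph V E \<longleftrightarrow> V \<noteq> {} \<and> (\<forall>u\<in>V. \<forall>v\<in>V. (u, v) \<in> (adj E)\<^sup>*)"

definition chemical_bicyclic :: "'a set \<Rightarrow> 'a set set \<Rightarrow> bool" where
  "chemical_bicyclic V E \<longleftrightarrow> simple_graph V E \<and> connected_graph V E \<and>
     card E = card V + 1 \<and> (\<forall>v\<in>V. deg E v \<le> 4)"

definition nvert :: "'a set \<Rightarrow> 'a set set \<Rightarrow> nat \<Rightarrow> nat" where
  "nvert V E i = card {v \<in> V. deg E v = i}"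

definition medge :: "'a set set \<Rightarrow> nat \<Rightarrow> nat \<Rightarrow> nat" where
  "medge E i j = card {e \<in> E. \<exists>u v. e = {u, v} \<and> u \<noteq> v \<and> deg E u = i \<and> deg E v = j}"

definition SO_red :: "'a set set \<Rightarrow> real" where
  "SO_red E = (\<Sum>e\<in>E. sqrt (\<Sum>v\<in>e. (real (deg E v) - 1)\<^sup>2))"

definition in_CB :: "nat \<Rightarrow> 'a set \<Rightarrow> 'a set set \<Rightarrow> bool" where
  "in_CB n V E \<longleftrightarrow> chemical_bicyclic V E \<and> card V = n"

definition beta2 :: "nat \<Rightarrow> 'a set \<Rightarrow> 'a set set \<Rightarrow> bool" where
  "beta2 n V E \<longleftrightarrow> in_CB n V E \<and>
     nvert V E 4 = 0 \<and> nvert V E 3 = 2 \<and> nvert V E 2 = n - 2 \<and> nvert V E 1 = 0 \<and>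
     (\<forall>i j. i \<le> j \<longrightarrow> medge E i j =
        (if (i, j) = (2, 3) then 4 else if (i, j) = (3, 3) then 1
         else if (i, j) = (2, 2) then n - 4 else 0))"

definition beta3 :: "nat \<Rightarrow> 'a set \<Rightarrow> 'a set set \<Rightarrow> bool" where
  "beta3 n V E \<longleftrightarrow> in_CB n V E \<and>
     nvert V E 4 = 0 \<and> nvert V E 3 = 2 \<and> nvert V E 2 = n - 2 \<and> nvert V E 1 = 0 \<and>
     (\<forall>i j. i \<le> j \<longrightarrow> medge E i j =
        (if (i, j) = (2, 3) then 6 else if (i, j) = (2, 2) then n - 5 else 0))"

definition beta9 :: "nat \<Rightarrow> 'a set \<Rightarrow> 'a set set \<Rightarrow> bool" where
  "beta9 n V E \<longleftrightarrow> in_CB n V E \<and>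
     nvert V E 4 = 0 \<and> nvert V E 3 = 3 \<and> nvert V E 2 = n - 4 \<and> nvert V E 1 = 1 \<and>
     (\<forall>i j. i \<le> j \<longrightarrow> medge E i j =
        (if (i, j) = (1, 2) then 1 else if (i, j) = (2, 3) then 3
         else if (i, j) = (3, 3) then 3 else if (i, j) = (2, 2) then n - 6 else 0))"

end

theory Submission
  imports Defs
begin

definition key :: "'a set set \<Rightarrow> 'a set \<Rightarrow> nat \<times> nat" where
  "key E e = (Min (deg E ` e), Max (deg E ` e))"

definition Fv :: "nat \<times> nat \<Rightarrow> real" where
  "Fv p = sqrt ((real (fst p) - 1)\<^sup>2 + (real (snd p) - 1)\<^sup>2)"

lemma key_pair: "key E {u, v} = (min (deg E u) (deg E v), max (deg E u) (deg E v))"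
  by (simp add: key_def)

lemma sg_finite: "simple_graph V E \<Longrightarrow> finite E"
proof -
  assume a: "simple_graph V E"
  have "E \<subseteq> Pow V"
  proof
    fix e assume "e \<in> E"
    then obtain u v where "e = {u, v}" "u \<in> V" "v \<in> V" using a unfolding simple_graph_def by blast
    then show "e \<in> Pow V" by auto
  qed
  moreover have "finite V" using a unfolding simple_graph_def by blast
  ultimately show ?thesis using finite_subset by auto
qed

lemma sg_edge: "simple_graph V E \<Longrightarrow> e \<in> E \<Longrightarrow> \<exists>u v. e = {u, v} \<and> u \<noteq> v \<and> u \<in> V \<and> v \<in> V"
  unfolding simple_graph_def by blast

lemma SO_key: assumes "simple_graph V E" shows "SO_red E = (\<Sum>e\<in>E. Fv (key E e))"
  unfolding SO_red_def
proof (rule sum.cong[OF refl])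
  fix e assume "e \<in> E"
  then obtain u v where e: "e = {u, v}" "u \<noteq> v" using sg_edge[OF assms] by blast
  have s: "(\<Sum>x\<in>e. (real (deg E x) - 1)\<^sup>2) = (real (deg E u) - 1)\<^sup>2 + (real (deg E v) - 1)\<^sup>2"
    using e by simp
  show "sqrt (\<Sum>v\<in>e. (real (deg E v) - 1)\<^sup>2) = Fv (key E e)"
  proof (cases "deg E u \<le> deg E v")
    case True
    have "Fv (key E e) = sqrt ((real (deg E u) - 1)\<^sup>2 + (real (deg E v) - 1)\<^sup>2)"
      using True unfolding e(1) key_pair Fv_def by (simp add: min_def max_def)
    then show ?thesis using s by simp
  next
    case False
    have "Fv (key E e) = sqrt ((real (deg E u) - 1)\<^sup>2 + (real (deg E v) - 1)\<^sup>2)"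
      using False unfolding e(1) key_pair Fv_def by (simp add: min_def max_def add.commute)
    then show ?thesis using s by simp
  qed
qed

lemma medge_key: assumes "simple_graph V E" "i \<le> j"
  shows "medge E i j = card {e\<in>E. key E e = (i, j)}"
  unfolding medge_def
proof (rule arg_cong[where f=card], rule Collect_cong, rule conj_cong[OF refl])
  fix e assume "e \<in> E"
  then obtain u v where e: "e = {u, v}" "u \<noteq> v" using sg_edge[OF assms(1)] by blast
  show "(\<exists>u v. e = {u, v} \<and> u \<noteq> v \<and> deg E u = i \<and> deg E v = j) = (key E e = (i, j))"
  proof
    assume "\<exists>u v. e = {u, v} \<and> u \<noteq> v \<and> deg E u = i \<and> deg E v = j"
    then obtain u' v' where "e = {u', v'}" "deg E u' = i" "deg E v' = j" by blast
    then show "key E e = (i, j)" using assms(2) by (simp add: key_pair)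
  next
    assume "key E e = (i, j)"
    then show "\<exists>u v. e = {u, v} \<and> u \<noteq> v \<and> deg E u = i \<and> deg E v = j"
      using e by (cases "deg E u \<le> deg E v") (auto simp: key_pair min_def max_def insert_commute split: if_splits)
  qed
qed

lemma sum_by_key:
  assumes "finite E" "finite K" "\<forall>e\<in>E. g e \<in> K"
  shows "(\<Sum>e\<in>E. (\<phi> (g e) :: 'b :: semiring_1)) = (\<Sum>p\<in>K. of_nat (card {e\<in>E. g e = p}) * \<phi> p)"
proof -
  have sub: "g ` E \<subseteq> K" using assms(3) by blast
  have "(\<Sum>p\<in>K. of_nat (card {e\<in>E. g e = p}) * \<phi> p) = (\<Sum>p\<in>K. \<Sum>e\<in>{e\<in>E. g e = p}. \<phi> (g e))"
    by (rule sum.cong) simp_all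
  also have "\<dots> = (\<Sum>e\<in>E. \<phi> (g e))" by (rule sum.group[OF assms(1,2) sub])
  finally show ?thesis by simp
qed

lemma handshake:
  assumes "simple_graph V E"
  shows "(\<Sum>e\<in>E. card {x\<in>e. deg E x = i}) = i * nvert V E i"
proof -
  have fV: "finite V" using assms unfolding simple_graph_def by blast
  have fE: "finite E" using sg_finite[OF assms] .
  let ?Vi = "{v\<in>V. deg E v = i}"
  have "i * nvert V E i = (\<Sum>v\<in>?Vi. deg E v)" unfolding nvert_def by simp
  also have "\<dots> = (\<Sum>v\<in>?Vi. \<Sum>e\<in>E. if v \<in> e then 1 else 0)"
    unfolding deg_def by (rule sum.cong[OF refl]) (simp add: sum.If_cases fE Int_def)
  also have "\<dots> = (\<Sum>e\<in>E. \<Sum>v\<in>?Vi. if v \<in> e then 1 else 0)" by (rule sum.swap)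
  also have "\<dots> = (\<Sum>e\<in>E. card {x\<in>e. deg E x = i})"
  proof (rule sum.cong[OF refl])
    fix e assume "e \<in> E"
    then have "e \<subseteq> V" using sg_edge[OF assms] by blast
    then have "?Vi \<inter> {v. v \<in> e} = {x\<in>e. deg E x = i}" by blast
    then show "(\<Sum>v\<in>?Vi. if v \<in> e then 1 else 0) = card {x\<in>e. deg E x = i}"
      using fV by (simp add: sum.If_cases)
  qed
  finally show ?thesis by simp
qed

lemma cnt_key: assumes "simple_graph V E" "e \<in> E"
  shows "card {x\<in>e. deg E x = i} = (if fst (key E e) = i then 1 else 0) + (if snd (key E e) = i then 1 else 0)"
proof -
  obtain u v where e: "e = {u, v}" "u \<noteq> v" using sg_edge[OF assms] by blast
  have s: "{x\<in>e. deg E x = i} = (if deg E u = i then {u} else {}) \<union> (if deg E v = i then {v} else {})"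
    using e by auto
  show ?thesis unfolding s using e
    by (cases "deg E u = i"; cases "deg E v = i"; simp add: key_pair min_def max_def)
qed


lemma cb_sg: "in_CB n V E \<Longrightarrow> simple_graph V E"
  unfolding in_CB_def chemical_bicyclic_def by simp

lemma cb_conn: "in_CB n V E \<Longrightarrow> u \<in> V \<Longrightarrow> v \<in> V \<Longrightarrow> (u, v) \<in> (adj E)\<^sup>*"
  unfolding in_CB_def chemical_bicyclic_def connected_graph_def by simp

lemma cb_fin: "in_CB n V E \<Longrightarrow> finite V"
  unfolding in_CB_def chemical_bicyclic_def simple_graph_def by simp

lemma deg_le4: "in_CB n V E \<Longrightarrow> v \<in> V \<Longrightarrow> deg E v \<le> 4"
  unfolding in_CB_def chemical_bicyclic_def by simp

lemma deg_pos:
  assumes cb: "in_CB n V E" and n: "n \<ge> 2" and v: "v \<in> V"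
  shows "deg E v \<ge> 1"
proof -
  have cV: "card V = n" using cb unfolding in_CB_def by simp
  have "\<exists>u\<in>V. u \<noteq> v"
  proof (rule ccontr)
    assume "\<not> ?thesis"
    then have "V \<subseteq> {v}" by blast
    then have "card V \<le> card {v}" by (intro card_mono) simp_all
    then have "card V \<le> 1" by simp
    then show False using cV n by simp
  qed
  then obtain u where u: "u \<in> V" "u \<noteq> v" by blast
  have "(v, u) \<in> (adj E)\<^sup>*" using cb_conn[OF cb v u(1)] .
  then have "(v, u) \<in> (adj E)\<^sup>+" using u(2) by (simp add: rtrancl_eq_or_trancl)
  from tranclD[OF this] obtain w where "(v, w) \<in> adj E" by blast
  then have mem: "{v, w} \<in> {e\<in>E. v \<in> e}" unfolding adj_def by simp
  have fin: "finite {e\<in>E. v \<in> e}" using sg_finite[OF cb_sg[OF cb]] by simp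
  have "card {e\<in>E. v \<in> e} > 0" using fin mem by (auto simp: card_gt_0_iff)
  then show ?thesis unfolding deg_def by simp
qed

lemma sg_sub: "simple_graph V E \<Longrightarrow> e \<in> E \<Longrightarrow> e \<subseteq> V"
  using sg_edge[of V E e] by auto

lemma m11_zero:
  assumes cb: "in_CB n V E" and n: "n \<ge> 3"
  shows "medge E 1 1 = 0"
proof -
  have sg: "simple_graph V E" using cb_sg[OF cb] .
  have fE: "finite E" using sg_finite[OF sg] .
  have cV: "card V = n" using cb unfolding in_CB_def by simp
  have "{e \<in> E. \<exists>u v. e = {u, v} \<and> u \<noteq> v \<and> deg E u = 1 \<and> deg E v = 1} = {}"
  proof (rule ccontr)
    assume "\<not> ?thesis"
    then obtain e where "e \<in> E" "\<exists>u v. e = {u, v} \<and> u \<noteq> v \<and> deg E u = 1 \<and> deg E v = 1" by auto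
    then obtain u v where uv: "{u, v} \<in> E" "u \<noteq> v" "deg E u = 1" "deg E v = 1" by auto
    have uV: "u \<in> V" using sg_sub[OF sg uv(1)] by simp
    have uniq: "\<And>x y. x \<in> {u, v} \<Longrightarrow> {x, y} \<in> E \<Longrightarrow> {x, y} = {u, v}"
    proof -
      fix x y assume x: "x \<in> {u, v}" and xy: "{x, y} \<in> E"
      have "card {e\<in>E. x \<in> e} = 1" using x uv unfolding deg_def by auto
      then obtain e0 where e0: "{e\<in>E. x \<in> e} = {e0}" using card_1_singletonE by blast
      have m1: "{x, y} \<in> {e\<in>E. x \<in> e}" using xy by simp
      have m2: "{u, v} \<in> {e\<in>E. x \<in> e}" using x uv(1) by simp
      have "{x, y} = e0" using m1 unfolding e0 by simp
      moreover have "{u, v} = e0" using m2 unfolding e0 by simp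
      ultimately show "{x, y} = {u, v}" by simp
    qed
    have reach: "(u, z) \<in> (adj E)\<^sup>* \<Longrightarrow> z \<in> {u, v}" for z
    proof (induction rule: rtrancl_induct)
      case base then show ?case by simp
    next
      case (step y z)
      then have "{y, z} \<in> E" unfolding adj_def by simp
      then have eq: "{y, z} = {u, v}" using uniq step.IH by simp
      show ?case by (subst eq[symmetric]) simp
    qed
    have "V \<subseteq> {u, v}"
    proof
      fix z assume "z \<in> V"
      then have "(u, z) \<in> (adj E)\<^sup>*" using cb_conn[OF cb uV] by simp
      then show "z \<in> {u, v}" using reach by blast
    qed
    then have "card V \<le> card {u, v}" by (simp add: card_mono)
    also have "\<dots> \<le> 2" by (simp add: card_insert_le_m1)
    finally show False using cV n by simp
  qed
  then show ?thesis unfolding medge_def by (subst \<open>_ = {}\<close>) simp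
qed

lemma mii_choose:
  assumes cb: "in_CB n V E"
  shows "medge E i i \<le> nvert V E i choose 2"
proof -
  have sg: "simple_graph V E" using cb_sg[OF cb] .
  let ?Vi = "{v\<in>V. deg E v = i}"
  have "{e\<in>E. key E e = (i, i)} \<subseteq> {B. B \<subseteq> ?Vi \<and> card B = 2}"
  proof
    fix e assume e: "e \<in> {e\<in>E. key E e = (i, i)}"
    then obtain u v where uv: "e = {u, v}" "u \<noteq> v" "u \<in> V" "v \<in> V" using sg_edge[OF sg] by blast
    then have "deg E u = i" "deg E v = i" using e by (auto simp: key_pair min_def max_def split: if_splits)
    then show "e \<in> {B. B \<subseteq> ?Vi \<and> card B = 2}" using uv by auto
  qed
  then have "card {e\<in>E. key E e = (i, i)} \<le> card {B. B \<subseteq> ?Vi \<and> card B = 2}"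
    by (intro card_mono) (use cb_fin[OF cb] in auto)
  also have "\<dots> = nvert V E i choose 2" unfolding nvert_def
    by (rule n_subsets) (use cb_fin[OF cb] in auto)
  finally show ?thesis using medge_key[OF sg, of i i] by simp
qed

definition KK :: "(nat \<times> nat) set" where
  "KK = {(1,1),(1,2),(1,3),(1,4),(2,2),(2,3),(2,4),(3,3),(3,4),(4,4)}"

lemma KK_intro:
  fixes a b :: nat
  assumes "1 \<le> a" "a \<le> b" "b \<le> 4"
  shows "(a, b) \<in> KK"
proof -
  have "a = 1 \<or> a = 2 \<or> a = 3 \<or> a = 4" using assms by arith
  moreover have "b = 1 \<or> b = 2 \<or> b = 3 \<or> b = 4" using assms by arith
  ultimately show ?thesis using assms unfolding KK_def by (elim disjE) simp_all
qed

lemma key_in_KK: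
  assumes cb: "in_CB n V E" and n: "n \<ge> 2" and e: "e \<in> E"
  shows "key E e \<in> KK"
proof -
  obtain u v where uv: "e = {u, v}" "u \<noteq> v" "u \<in> V" "v \<in> V" using sg_edge[OF cb_sg[OF cb] e] by blast
  have "1 \<le> deg E u" "1 \<le> deg E v" using deg_pos[OF cb n] uv by simp_all
  moreover have "deg E u \<le> 4" "deg E v \<le> 4" using deg_le4[OF cb] uv by simp_all
  ultimately show ?thesis unfolding uv key_pair by (intro KK_intro) simp_all
qed

lemma sqrt8: "sqrt 8 = 2 * sqrt 2"
proof -
  have "sqrt 8 = sqrt (2^2 * 2)" by simp
  also have "\<dots> = 2 * sqrt 2" by (simp only: real_sqrt_mult real_sqrt_abs)
  finally show ?thesis by simp
qed

lemma sqrt18: "sqrt 18 = 3 * sqrt 2"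
proof -
  have "sqrt 18 = sqrt (3^2 * 2)" by simp
  also have "\<dots> = 3 * sqrt 2" by (simp only: real_sqrt_mult real_sqrt_abs)
  finally show ?thesis by simp
qed

lemma Fv_vals: "Fv (1,1) = 0" "Fv (1,2) = 1" "Fv (1,3) = 2" "Fv (1,4) = 3"
  "Fv (2,2) = sqrt 2" "Fv (2,3) = sqrt 5" "Fv (2,4) = sqrt 10"
  "Fv (3,3) = 2 * sqrt 2" "Fv (3,4) = sqrt 13" "Fv (4,4) = 3 * sqrt 2"
  by (simp_all add: Fv_def sqrt8 sqrt18)

lemma sum_KK: "(\<Sum>p\<in>KK. f p) = f (1,1) + f (1,2) + f (1,3) + f (1,4) + f (2,2) + f (2,3) + f (2,4)
   + f (3,3) + f (3,4) + f (4,4)"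
  by (simp add: KK_def add.assoc)

lemma formulas:
  assumes cb: "in_CB n V E" and n: "n \<ge> 6"
  shows "SO_red E = real (medge E 1 2) + 2 * real (medge E 1 3) + 3 * real (medge E 1 4)
      + real (medge E 2 2) * sqrt 2 + real (medge E 2 3) * sqrt 5 + real (medge E 2 4) * sqrt 10
      + real (medge E 3 3) * (2 * sqrt 2) + real (medge E 3 4) * sqrt 13 + real (medge E 4 4) * (3 * sqrt 2)"
    and "nvert V E 1 = medge E 1 2 + medge E 1 3 + medge E 1 4"
    and "2 * nvert V E 2 = medge E 1 2 + 2 * medge E 2 2 + medge E 2 3 + medge E 2 4"
    and "3 * nvert V E 3 = medge E 1 3 + medge E 2 3 + 2 * medge E 3 3 + medge E 3 4"
    and "4 * nvert V E 4 = medge E 1 4 + medge E 2 4 + medge E 3 4 + 2 * medge E 4 4"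
    and "n + 1 = medge E 1 2 + medge E 1 3 + medge E 1 4 + medge E 2 2 + medge E 2 3 + medge E 2 4
           + medge E 3 3 + medge E 3 4 + medge E 4 4"
    and "nvert V E 1 + nvert V E 2 + nvert V E 3 + nvert V E 4 = n"
    and "medge E 3 3 \<le> nvert V E 3 choose 2"
    and "medge E 4 4 \<le> nvert V E 4 choose 2"
proof -
  have sg: "simple_graph V E" using cb_sg[OF cb] .
  have fE: "finite E" using sg_finite[OF sg] .
  have fK: "finite KK" by (simp add: KK_def)
  have inK: "\<forall>e\<in>E. key E e \<in> KK" using key_in_KK[OF cb] n by auto
  have cm: "\<And>i j. i \<le> j \<Longrightarrow> card {e\<in>E. key E e = (i, j)} = medge E i j"
    using medge_key[OF sg] by simp
  have m11: "medge E 1 1 = 0" using m11_zero[OF cb] n by simp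
  note sbk = sum_by_key[OF fE fK inK]
  show "SO_red E = real (medge E 1 2) + 2 * real (medge E 1 3) + 3 * real (medge E 1 4)
      + real (medge E 2 2) * sqrt 2 + real (medge E 2 3) * sqrt 5 + real (medge E 2 4) * sqrt 10
      + real (medge E 3 3) * (2 * sqrt 2) + real (medge E 3 4) * sqrt 13 + real (medge E 4 4) * (3 * sqrt 2)"
    unfolding SO_key[OF sg] sbk sum_KK by (simp add: cm Fv_vals Fv_vals[unfolded One_nat_def] m11)
  have hs: "i * nvert V E i = (\<Sum>p\<in>KK. card {e\<in>E. key E e = p} * ((if fst p = i then 1 else 0) + (if snd p = i then 1 else 0)))" for i
  proof -
    have "i * nvert V E i = (\<Sum>e\<in>E. card {x\<in>e. deg E x = i})" using handshake[OF sg] by simp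
    also have "\<dots> = (\<Sum>e\<in>E. (\<lambda>p. (if fst p = i then 1 else 0) + (if snd p = i then 1 else 0)) (key E e))"
      by (rule sum.cong[OF refl]) (simp add: cnt_key[OF sg])
    also have "\<dots> = (\<Sum>p\<in>KK. card {e\<in>E. key E e = p} * ((if fst p = i then 1 else 0) + (if snd p = i then 1 else 0)))"
      using sbk[of "\<lambda>p. ((if fst p = i then 1 else 0) + (if snd p = i then 1 else 0)) :: nat"] by simp
    finally show ?thesis .
  qed
  show "nvert V E 1 = medge E 1 2 + medge E 1 3 + medge E 1 4"
    using hs[of 1] unfolding sum_KK by (simp add: cm m11 m11[unfolded One_nat_def])
  show "2 * nvert V E 2 = medge E 1 2 + 2 * medge E 2 2 + medge E 2 3 + medge E 2 4"
    using hs[of 2] unfolding sum_KK by (simp add: cm m11 m11[unfolded One_nat_def])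
  show "3 * nvert V E 3 = medge E 1 3 + medge E 2 3 + 2 * medge E 3 3 + medge E 3 4"
    using hs[of 3] unfolding sum_KK by (simp add: cm m11 m11[unfolded One_nat_def])
  show "4 * nvert V E 4 = medge E 1 4 + medge E 2 4 + medge E 3 4 + 2 * medge E 4 4"
    using hs[of 4] unfolding sum_KK by (simp add: cm m11 m11[unfolded One_nat_def])
  have cE: "card E = n + 1" using cb unfolding in_CB_def chemical_bicyclic_def by simp
  have "card E = (\<Sum>e\<in>E. (\<lambda>p. 1::nat) (key E e))" by simp
  also have "\<dots> = (\<Sum>p\<in>KK. card {e\<in>E. key E e = p})" using sbk[of "\<lambda>p. 1::nat"] by simp
  finally show "n + 1 = medge E 1 2 + medge E 1 3 + medge E 1 4 + medge E 2 2 + medge E 2 3 + medge E 2 4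
           + medge E 3 3 + medge E 3 4 + medge E 4 4"
    unfolding sum_KK cE by (simp add: cm m11 m11[unfolded One_nat_def])
  have fV: "finite V" using cb_fin[OF cb] .
  have dV: "deg E ` V \<subseteq> {1..4}" using deg_pos[OF cb] deg_le4[OF cb] n by fastforce
  have "card V = (\<Sum>v\<in>V. 1::nat)" by simp
  also have "\<dots> = (\<Sum>i\<in>{1..4}. \<Sum>v\<in>{v\<in>V. deg E v = i}. 1)"
    by (rule sum.group[OF fV _ dV, symmetric]) simp
  also have "\<dots> = (\<Sum>i\<in>{1..4}. nvert V E i)" unfolding nvert_def by simp
  also have "\<dots> = nvert V E 1 + nvert V E 2 + nvert V E 3 + nvert V E 4"
    by (simp add: numeral_eq_Suc)
  finally show "nvert V E 1 + nvert V E 2 + nvert V E 3 + nvert V E 4 = n"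
    using cb unfolding in_CB_def by simp
  show "medge E 3 3 \<le> nvert V E 3 choose 2" "medge E 4 4 \<le> nvert V E 4 choose 2"
    using mii_choose[OF cb] by auto
qed


lemma medge_forall:
  assumes cb: "in_CB n V E" and n: "n \<ge> 6"
    and inK: "\<forall>i j. (i, j) \<in> KK \<longrightarrow> medge E i j = F i j"
    and outK: "\<forall>i j. i \<le> j \<and> (i, j) \<notin> KK \<longrightarrow> F i j = 0"
  shows "\<forall>i j. i \<le> j \<longrightarrow> medge E i j = F i j"
proof (intro allI impI)
  fix i j :: nat assume ij: "i \<le> j"
  show "medge E i j = F i j"
  proof (cases "(i, j) \<in> KK")
    case True then show ?thesis using inK by blast
  next
    case False
    have sg: "simple_graph V E" using cb_sg[OF cb] .
    have ne: "key E e \<noteq> (i, j)" if "e \<in> E" for e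
    proof -
      have "key E e \<in> KK" using key_in_KK[OF cb _ that] n by simp
      then show ?thesis using False by auto
    qed
    have "{e\<in>E. key E e = (i, j)} = {}" using ne by blast
    then have "medge E i j = 0" using medge_key[OF sg ij] by (metis card.empty)
    then show ?thesis using outK ij False by simp
  qed
qed

lemma lower:
  fixes b c d f g h i j N1 N3 N4 s2 s5 s10 s13 :: real
  assumes nn: "c \<ge> 0" "d \<ge> 0" "f \<ge> 0" "g \<ge> 0" "i \<ge> 0"
    and s: "s2 = sqrt 2" "s5 = sqrt 5" "s10 = sqrt 10" "s13 = sqrt 13"
    and e1: "N1 = b + c + d" and e3: "3 * N3 = c + f + 2 * h + i" and e4: "4 * N4 = d + g + i + 2 * j"
  shows "b + 2 * c + 3 * d + f * s5 + g * s10 + h * (2 * s2) + i * s13 + j * (3 * s2)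
     - (b + c + d + f + g + h + i + j) * s2 \<ge> (1 - s2) * N1 + 3/2 * s2 * N3 + 4 * s2 * N4"
proof -
  have b2: "s2 \<le> 2" unfolding s by (rule real_le_lsqrt) simp_all
  have b5: "s5 \<ge> 3/2 * s2" unfolding s by (rule real_le_rsqrt) (simp add: power_mult_distrib power_divide)
  have b10: "s10 \<ge> 2 * s2" unfolding s by (rule real_le_rsqrt) (simp add: power_mult_distrib power_divide)
  have b13: "s13 \<ge> 5/2 * s2" unfolding s by (rule real_le_rsqrt) (simp add: power_mult_distrib power_divide)
  have eq: "b + 2 * c + 3 * d + f * s5 + g * s10 + h * (2 * s2) + i * s13 + j * (3 * s2)
     - (b + c + d + f + g + h + i + j) * s2 - ((1 - s2) * N1 + 3/2 * s2 * N3 + 4 * s2 * N4)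
     = c * (1 - s2 / 2) + d * (2 - s2) + f * (s5 - 3/2 * s2) + g * (s10 - 2 * s2) + i * (s13 - 5/2 * s2)"
  proof -
    have "3/2 * s2 * N3 = s2 / 2 * (3 * N3)" by simp
    moreover have "4 * s2 * N4 = s2 * (4 * N4)" by simp
    ultimately show ?thesis unfolding e1 e3 e4 by (simp add: algebra_simps)
  qed
  have "0 \<le> c * (1 - s2 / 2) + d * (2 - s2) + f * (s5 - 3/2 * s2) + g * (s10 - 2 * s2) + i * (s13 - 5/2 * s2)"
    using nn b2 b5 b10 b13 by (intro add_nonneg_nonneg mult_nonneg_nonneg) auto
  then show ?thesis using eq by linarith
qed


lemma nums: "1.41421 < sqrt 2" "sqrt 2 < 1.41422" "2.23606 < sqrt 5" "sqrt 5 < 2.23607"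
  "3.16227 < sqrt 10" "sqrt 10 < 3.16228" "3.60555 < sqrt 13" "sqrt 13 < 3.60556"
  by (rule real_less_rsqrt real_less_lsqrt; simp add: power2_eq_square)+

theorem theorem3p10:
  fixes n :: nat
    and V1 :: "'a set" and E1 :: "'a set set"
    and V2 :: "'b set" and E2 :: "'b set set"
    and V3 :: "'c set" and E3 :: "'c set set"
    and V :: "'d set" and E :: "'d set set"
  assumes "n \<ge> 6"
    and "beta2 n V1 E1"
    and "beta3 n V2 E2"
    and "beta9 n V3 E3"
    and "in_CB n V E"
    and "\<not> beta2 n V E" and "\<not> beta3 n V E" and "\<not> beta9 n V E"
  shows "SO_red E1 < SO_red E2 \<and> SO_red E2 < SO_red E3 \<and> SO_red E3 < SO_red E"
proof -
  note n6 = assms(1)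
  have rn: "real (n - 4) = real n - 4" "real (n - 5) = real n - 5" "real (n - 6) = real n - 6"
    using n6 by (simp_all add: of_nat_diff)
  have cb1: "in_CB n V1 E1" and mv1: "\<forall>i j. i \<le> j \<longrightarrow> medge E1 i j =
        (if (i, j) = (2, 3) then 4 else if (i, j) = (3, 3) then 1
         else if (i, j) = (2, 2) then n - 4 else 0)" using assms(2) unfolding beta2_def by auto
  have SO1: "SO_red E1 = 4 * sqrt 5 + 2 * sqrt 2 + (real n - 4) * sqrt 2"
  proof -
    have v: "medge E1 1 2 = 0" "medge E1 1 3 = 0" "medge E1 1 4 = 0" "medge E1 2 2 = n - 4"
      "medge E1 2 3 = 4" "medge E1 2 4 = 0" "medge E1 3 3 = 1" "medge E1 3 4 = 0" "medge E1 4 4 = 0"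
      using mv1 by auto
    show ?thesis using formulas(1)[OF cb1 n6] by (simp add: v v[unfolded One_nat_def] rn algebra_simps)
  qed
  have cb2: "in_CB n V2 E2" and mv2: "\<forall>i j. i \<le> j \<longrightarrow> medge E2 i j =
        (if (i, j) = (2, 3) then 6 else if (i, j) = (2, 2) then n - 5 else 0)"
    using assms(3) unfolding beta3_def by auto
  have SO2: "SO_red E2 = 6 * sqrt 5 + (real n - 5) * sqrt 2"
  proof -
    have v: "medge E2 1 2 = 0" "medge E2 1 3 = 0" "medge E2 1 4 = 0" "medge E2 2 2 = n - 5"
      "medge E2 2 3 = 6" "medge E2 2 4 = 0" "medge E2 3 3 = 0" "medge E2 3 4 = 0" "medge E2 4 4 = 0"
      using mv2 by auto
    show ?thesis using formulas(1)[OF cb2 n6] by (simp add: v v[unfolded One_nat_def] rn algebra_simps)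
  qed
  have cb3: "in_CB n V3 E3" and mv3: "\<forall>i j. i \<le> j \<longrightarrow> medge E3 i j =
        (if (i, j) = (1, 2) then 1 else if (i, j) = (2, 3) then 3
         else if (i, j) = (3, 3) then 3 else if (i, j) = (2, 2) then n - 6 else 0)"
    using assms(4) unfolding beta9_def by auto
  have SO3: "SO_red E3 = 1 + 3 * sqrt 5 + 6 * sqrt 2 + (real n - 6) * sqrt 2"
  proof -
    have v: "medge E3 1 2 = 1" "medge E3 1 3 = 0" "medge E3 1 4 = 0" "medge E3 2 2 = n - 6"
      "medge E3 2 3 = 3" "medge E3 2 4 = 0" "medge E3 3 3 = 3" "medge E3 3 4 = 0" "medge E3 4 4 = 0"
      using mv3 by auto
    show ?thesis using formulas(1)[OF cb3 n6] by (simp add: v v[unfolded One_nat_def] rn algebra_simps)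
  qed
  have c12: "SO_red E1 < SO_red E2" unfolding SO1 SO2 using nums by (simp add: algebra_simps)
  have c23: "SO_red E2 < SO_red E3" unfolding SO3 SO2 using nums by (simp add: algebra_simps)
  have c3: "SO_red E3 < SO_red E"
  proof -
    have cb: "in_CB n V E" using assms(5) .
    note F = formulas[OF cb n6]
    have m11: "medge E 1 1 = 0" using m11_zero[OF cb] n6 by simp
    obtain b c d e f g h i j N1 N2 N3 N4 :: nat where
      vb: "medge E 1 2 = b" and vc: "medge E 1 3 = c" and vd: "medge E 1 4 = d"
      and ve: "medge E 2 2 = e" and vf: "medge E 2 3 = f" and vg: "medge E 2 4 = g"
      and vh: "medge E 3 3 = h" and vi: "medge E 3 4 = i" and vj: "medge E 4 4 = j"
      and v1: "nvert V E 1 = N1" and v2: "nvert V E 2 = N2" and v3: "nvert V E 3 = N3"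
      and v4: "nvert V E 4 = N4" by blast
    note vs = vb vc vd ve vf vg vh vi vj v1 v2 v3 v4
    have h1: "N1 = b + c + d" using F(2) unfolding vs .
    have h2: "2 * N2 = b + 2 * e + f + g" using F(3) unfolding vs .
    have h3: "3 * N3 = c + f + 2 * h + i" using F(4) unfolding vs .
    have h4: "4 * N4 = d + g + i + 2 * j" using F(5) unfolding vs .
    have h5: "n + 1 = b + c + d + e + f + g + h + i + j" using F(6) unfolding vs .
    have h6: "N1 + N2 + N3 + N4 = n" using F(7) unfolding vs .
    have h7: "h \<le> N3 choose 2" using F(8) unfolding vs .
    have h8: "j \<le> N4 choose 2" using F(9) unfolding vs .
    have hk: "N3 + 2 * N4 = N1 + 2" using h1 h2 h3 h4 h5 h6 by linarith
    define s2 where "s2 = sqrt 2"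
    define s5 where "s5 = sqrt 5"
    define s10 where "s10 = sqrt 10"
    define s13 where "s13 = sqrt 13"
    note ns = nums[folded s2_def s5_def s10_def s13_def]
    define Y where "Y = real b + 2 * real c + 3 * real d + real f * s5 + real g * s10
      + real h * (2 * s2) + real i * s13 + real j * (3 * s2)
      - (real b + real c + real d + real f + real g + real h + real i + real j) * s2"
    have SOE: "SO_red E = Y + (real n + 1) * s2"
    proof -
      have rn: "real n + 1 = real b + real c + real d + real e + real f + real g + real h + real i + real j"
        using arg_cong[OF h5, of real] by simp
      show ?thesis unfolding F(1) vs rn Y_def s2_def s5_def s10_def s13_def by (simp add: algebra_simps)
    qed
    have SO3': "SO_red E3 = 1 + 3 * s5 - s2 + (real n + 1) * s2"
      unfolding SO3 s2_def s5_def by (simp add: algebra_simps)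
    have isb2: "beta2 n V E" if "N4 = 0" "N3 = 2" "N1 = 0" "f = 4" "h = 1" "b = 0" "c = 0" "d = 0"
      "g = 0" "i = 0" "j = 0" "e = n - 4"
      unfolding beta2_def
    proof (intro conjI)
      show "\<forall>i j. i \<le> j \<longrightarrow> medge E i j =
        (if (i, j) = (2, 3) then 4 else if (i, j) = (3, 3) then 1
         else if (i, j) = (2, 2) then n - 4 else 0)"
        by (rule medge_forall[OF cb n6]) (use that vs m11 in \<open>auto simp: KK_def\<close>)
    qed (use that cb vs h6 in auto)
    have isb3: "beta3 n V E" if "N4 = 0" "N3 = 2" "N1 = 0" "f = 6" "h = 0" "b = 0" "c = 0" "d = 0"
      "g = 0" "i = 0" "j = 0" "e = n - 5"
      unfolding beta3_def
    proof (intro conjI)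
      show "\<forall>i j. i \<le> j \<longrightarrow> medge E i j =
        (if (i, j) = (2, 3) then 6 else if (i, j) = (2, 2) then n - 5 else 0)"
        by (rule medge_forall[OF cb n6]) (use that vs m11 in \<open>auto simp: KK_def\<close>)
    qed (use that cb vs h6 in auto)
    have isb9: "beta9 n V E" if "N4 = 0" "N3 = 3" "N1 = 1" "f = 3" "h = 3" "b = 1" "c = 0" "d = 0"
      "g = 0" "i = 0" "j = 0" "e = n - 6"
      unfolding beta9_def
    proof (intro conjI)
      show "\<forall>i j. i \<le> j \<longrightarrow> medge E i j =
        (if (i, j) = (1, 2) then 1 else if (i, j) = (2, 3) then 3
         else if (i, j) = (3, 3) then 3 else if (i, j) = (2, 2) then n - 6 else 0)"
        by (rule medge_forall[OF cb n6]) (use that vs m11 in \<open>auto simp: KK_def\<close>)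
    qed (use that cb vs h6 in auto)
    have Ygt: "Y > 1 + 3 * s5 - s2"
    proof (cases "2 \<le> N4 \<or> (N4 = 1 \<and> 1 \<le> N3) \<or> 4 \<le> N3")
      case True
      have low: "Y \<ge> (1 - s2) * real N1 + 3/2 * s2 * real N3 + 4 * s2 * real N4"
        unfolding Y_def
      proof (rule lower)
        show "real N1 = real b + real c + real d" using arg_cong[OF h1, of real] by simp
        show "3 * real N3 = real c + real f + 2 * real h + real i" using arg_cong[OF h3, of real] by simp
        show "4 * real N4 = real d + real g + real i + 2 * real j" using arg_cong[OF h4, of real] by simp
      qed (simp_all add: s2_def s5_def s10_def s13_def)
      have rN1: "real N1 = real N3 + 2 * real N4 - 2" using arg_cong[OF hk, of real] by simp
      have T: "(1 - s2) * real N1 + 3/2 * s2 * real N3 + 4 * s2 * real N4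
          = real N1 + s2 * (real N3 / 2 + 2 * real N4 + 2)" unfolding rN1 by (simp add: algebra_simps)
      have M: "s2 * (real N3 / 2 + 2 * real N4 + 2) \<ge> 1.41421 * (real N3 / 2 + 2 * real N4 + 2)"
        by (rule mult_right_mono) (use ns in auto)
      have "real N1 + 1.41421 * (real N3 / 2 + 2 * real N4 + 2) > 1 + 3 * 2.23607 - 1.41421"
      proof -
        have rb: "2 \<le> real N4 \<or> (real N4 = 1 \<and> 1 \<le> real N3) \<or> 4 \<le> real N3" using True by auto
        have nn: "0 \<le> real N3" "0 \<le> real N4" by simp_all
        from rb show ?thesis
        proof (elim disjE conjE)
          assume "2 \<le> real N4" then show ?thesis using rN1 nn by (simp add: field_simps)
        next
          assume "real N4 = 1" "1 \<le> real N3" then show ?thesis using rN1 nn by (simp add: field_simps)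
        next
          assume "4 \<le> real N3" then show ?thesis using rN1 nn by (simp add: field_simps)
        qed
      qed
      then show ?thesis using low T M ns by linarith
    next
      case False
      then have "N4 = 0 \<and> N3 \<le> 3 \<or> N4 = 1 \<and> N3 = 0" by auto
      then consider (A) "N4 = 1" "N3 = 0" | (B) "N4 = 0" "N3 = 3" | (C) "N4 = 0" "N3 = 2"
        using hk by linarith
      then show ?thesis
      proof cases
        case A
        then have "N1 = 0" using hk by simp
        then have z: "b = 0" "c = 0" "d = 0" "f = 0" "h = 0" "i = 0" "j = 0" "g = 4"
          using h1 h3 h4 h8 A by (simp_all add: choose_two)
        show ?thesis unfolding Y_def z using ns by simp
      next
        case B
        then have N1: "N1 = 1" using hk by simp
        have z: "d = 0" "g = 0" "i = 0" "j = 0" using h4 B by simp_all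
        have hb: "h \<le> 3" using h7 B by (simp add: choose_two)
        have bc: "b + c = 1" using h1 N1 z by simp
        have fe: "c + f + 2 * h = 9" using h3 B z by simp
        consider (c1) "c = 1" "b = 0" | (c0) "c = 0" "b = 1" using bc by linarith
        then show ?thesis
        proof cases
          case c1
          then have "f = 8 - 2 * h" using fe by simp
          moreover have "h = 0 \<or> h = 1 \<or> h = 2 \<or> h = 3" using hb by linarith
          ultimately show ?thesis unfolding Y_def z c1 using ns by (auto simp: algebra_simps)
        next
          case c0
          then have ff: "f = 9 - 2 * h" using fe by simp
          have "h \<noteq> 3"
          proof
            assume h3': "h = 3"
            have "beta9 n V E" by (rule isb9) (use B N1 z c0 ff h3' h5 in auto)
            then show False using assms(8) by blast
          qed
          then have "h = 0 \<or> h = 1 \<or> h = 2" using hb by linarith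
          then show ?thesis unfolding Y_def z c0 ff using ns by (auto simp: algebra_simps)
        qed
      next
        case C
        then have N1: "N1 = 0" using hk by simp
        have z: "d = 0" "g = 0" "i = 0" "j = 0" "b = 0" "c = 0" using h4 h1 C N1 by simp_all
        have hb: "h \<le> 1" using h7 C by (simp add: choose_two)
        have fe: "f + 2 * h = 6" using h3 C z by simp
        show ?thesis
        proof (cases "h = 1")
          case True
          have "beta2 n V E" by (rule isb2) (use C N1 z fe True h5 in auto)
          then show ?thesis using assms(6) by blast
        next
          case False
          then have "h = 0" using hb by simp
          have "beta3 n V E" by (rule isb3) (use C N1 z fe \<open>h = 0\<close> h5 in auto)
          then show ?thesis using assms(7) by blast
        qed
      qed
    qed
    show ?thesis using SOE SO3' Ygt by linarith
  qed
  show ?thesis using c12 c23 c3 by blast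
qed

end
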